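(* Let $X\in\mathbb{R}^{n\times p}$, $y\in\mathbb{R}^n$, $\beta\in\mathbb{R}^p$ with $s=|S|\ge 1$, and put $\epsilon=y-X\beta$. Let $\lambda,\rho_1,\rho_2\ge 0$, $\tau\in[0,1)$, and let $\widehat\beta^{\tau}$ be a minimizer of $\beta'\mapsto V_\tau(\beta')$ (for $\tau=0$, of $V_0$). Suppose $1\le\max(q_R,\widehat s^{\tau})\le p$ and $\kappa_n+\lambda n^{-1}>0$. Then $$\|\widehat\beta^{\tau}-\beta\|_2\le\frac{q_R^{1/2}}{\kappa_n+\lambda n^{-1}}\left\{4\Big[1+\Big(\frac{\widehat s^{\tau}}{4s}\Big)^{1/2}\Big]\frac{\|X^T\epsilon\|_\infty}{n}+2\max_{j\in S}|\beta_j|\frac{\lambda}{n}+\Big[\frac{2c_2^{-1}+1}{\log(\tau^{-1})}+c_3^{-1}\Big]\frac{\rho_1+\rho_2}{n}\right\},$$ where $\kappa_n=n^{-1}\min_{\|w\|_2=1}w^TX^TXw$, $c_2=\min_{j\in\widehat S^{\tau}}|\widehat\beta^{\tau}_j|$, $c_3=\min_{j\in S}|\beta_j|$, and for $\tau=0$ the term $1/\log(\tau^{-1})$ is read as $0$.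
   Context: Groups: $G_1,\dots,G_m$ are pairwise disjoint nonempty subsets of $\{1,\dots,p\}$ whose union is $\{1,\dots,p\}$, with sizes $q_k=|G_k|$; $\beta_{G_k}$ (resp. $X_{G_k}$) denotes the subvector of $\beta$ (resp. the columns of $X$) indexed by $G_k$. For $\tau\in(0,1)$ define $$V_\tau(\beta')=\|y-X\beta'\|_2^2+\lambda\|\beta'\|_2^2+\rho_1\sum_{j=1}^p\frac{\log(1+\tau^{-1}|\beta'_j|)}{\log(1+\tau^{-1})}+\rho_2\sum_{k=1}^m\sqrt{q_k}\,\frac{\log(1+\tau^{-1}\|\beta'_{G_k}\|_2)}{\log(1+\tau^{-1})},$$ and $V_0(\beta')=\lim_{\tau\to0}V_\tau(\beta')=\|y-X\beta'\|_2^2+\lambda\|\beta'\|_2^2+\rho_1\#\{j:\beta'_j\neq0\}+\rho_2\sum_k\sqrt{q_k}\,\mathbb{I}\{\|\beta'_{G_k}\|_2\neq0\}$ (a minimizer of $V_0$ is called the gvsnss estimator). $\widehat S^{\tau}=\{j:\widehat\beta^{\tau}_j\ne0\}$, $\widehat s^{\tau}=|\widehat S^{\tau}|$. For the (true) vector $\beta$: $S=\{j:\beta_j\neq0\}$, $R=\{k:\|\beta_{G_k}\|_2\neq0\}$ (the groups covering $S$), $G_R=\bigcup_{k\in R}G_k$, $q_R=|G_R|=\sum_{k\in R}q_k$. *)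

theory Defs
  imports "HOL-Analysis.Analysis"
begin

text \<open>Vectors in R^p are real^'p, data matrix X in R^{n x p} is real^'p^'n
  (rows indexed by 'n); n = CARD('n), p = CARD('p).\<close>

definition is_group_partition :: "'p set set \<Rightarrow> bool" where
  "is_group_partition \<G> \<longleftrightarrow> disjoint \<G> \<and> {} \<notin> \<G> \<and> \<Union>\<G> = UNIV"

definition supp :: "real^'p \<Rightarrow> 'p set" where
  "supp b = {j. b$j \<noteq> 0}"

definition group_norm :: "real^'p \<Rightarrow> 'p set \<Rightarrow> real" where
  "group_norm b G = sqrt (\<Sum>j\<in>G. (b$j)^2)"

text \<open>V_tau for tau in (0,1) (natural logarithm; the base cancels in the ratio).\<close>
definition Vtau :: "real^'p^'n \<Rightarrow> real^'n \<Rightarrow> 'p set set \<Rightarrow> real \<Rightarrow> real \<Rightarrow> real \<Rightarrow> real \<Rightarrow> real^'p \<Rightarrow> real" where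
  "Vtau X y \<G> lam \<rho>1 \<rho>2 \<tau> b =
     (norm (y - X *v b))^2 + lam * (norm b)^2
     + \<rho>1 * (\<Sum>j\<in>UNIV. ln (1 + \<bar>b$j\<bar> / \<tau>) / ln (1 + 1/\<tau>))
     + \<rho>2 * (\<Sum>G\<in>\<G>. sqrt (real (card G)) * (ln (1 + group_norm b G / \<tau>) / ln (1 + 1/\<tau>)))"

definition V0 :: "real^'p^'n \<Rightarrow> real^'n \<Rightarrow> 'p set set \<Rightarrow> real \<Rightarrow> real \<Rightarrow> real \<Rightarrow> real^'p \<Rightarrow> real" where
  "V0 X y \<G> lam \<rho>1 \<rho>2 b =
     (norm (y - X *v b))^2 + lam * (norm b)^2
     + \<rho>1 * real (card (supp b))
     + \<rho>2 * (\<Sum>G\<in>\<G>. sqrt (real (card G)) * (if group_norm b G \<noteq> 0 then 1 else 0))"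

definition Vobj :: "real^'p^'n \<Rightarrow> real^'n \<Rightarrow> 'p set set \<Rightarrow> real \<Rightarrow> real \<Rightarrow> real \<Rightarrow> real \<Rightarrow> real^'p \<Rightarrow> real" where
  "Vobj X y \<G> lam \<rho>1 \<rho>2 \<tau> b =
     (if \<tau> = 0 then V0 X y \<G> lam \<rho>1 \<rho>2 b else Vtau X y \<G> lam \<rho>1 \<rho>2 \<tau> b)"

definition qR :: "'p set set \<Rightarrow> real^'p \<Rightarrow> nat" where
  "qR \<G> b = card (\<Union>{G\<in>\<G>. group_norm b G \<noteq> 0})"

text \<open>kappa_n = n^{-1} min over unit w of w^T X^T X w (the min is attained; written as Inf).\<close>
definition kappa :: "real^'p^'n \<Rightarrow> real" where
  "kappa X = (1 / real CARD('n)) * Inf {w \<bullet> ((transpose X ** X) *v w) | w. norm w = 1}"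

definition supnorm :: "real^'m \<Rightarrow> real" where
  "supnorm v = Max (range (\<lambda>i. \<bar>v$i\<bar>))"

end

theory Submission
  imports Defs
begin

definition phi :: "real \<Rightarrow> real \<Rightarrow> real" where
  "phi \<tau> t = (if \<tau> = 0 then (if t \<noteq> 0 then 1 else 0) else ln (1 + t/\<tau>) / ln (1 + 1/\<tau>))"

lemma phi_0[simp]: "phi \<tau> 0 = 0" by (simp add: phi_def)

lemma phi_nonneg: "0 \<le> \<tau> \<Longrightarrow> 0 \<le> t \<Longrightarrow> 0 \<le> phi \<tau> t"
  by (auto simp: phi_def intro!: divide_nonneg_nonneg)

lemma phi_bound:
  fixes a b c2 c2i c3 \<tau> :: real
  assumes t0: "0 \<le> \<tau>" and t1: "\<tau> < 1" and c3: "0 < c3" "c3 \<le> a" and b0: "0 \<le> b"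
    and c2i: "0 \<le> c2i" and bc: "b \<noteq> 0 \<Longrightarrow> c2i = 1/c2 \<and> 0 < c2 \<and> c2 \<le> b"
  shows "phi \<tau> a - phi \<tau> b \<le>
     ((2 * c2i + 1) * (if \<tau> = 0 then 0 else 1 / ln (1/\<tau>)) + 1/c3) * \<bar>a - b\<bar>"
proof -
  define T where "T = (if \<tau> = 0 then 0 else 1 / ln (1/\<tau>))"
  have T0: "T \<ge> 0" using t0 t1 by (auto simp: T_def)
  have a0: "a > 0" using c3 by linarith
  show ?thesis
  proof (cases "\<tau> = 0")
    case True
    show ?thesis
    proof (cases "b = 0")
      case True
      have "1 \<le> a / c3" using c3 by simp
      then show ?thesis using True \<open>\<tau> = 0\<close> a0 by (simp add: phi_def)
    next
      case False
      have "0 \<le> ((2 * c2i + 1) * (if \<tau> = 0 then 0 else 1 / ln (1/\<tau>)) + 1/c3) * \<bar>a - b\<bar>"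
        using c3 c2i T0 unfolding T_def by (intro mult_nonneg_nonneg add_nonneg_nonneg) auto
      then show ?thesis using False \<open>\<tau> = 0\<close> a0 by (simp add: phi_def)
    qed
  next
    case tn: False
    have tp: "\<tau> > 0" using t0 tn by simp
    have l1: "ln (1/\<tau>) > 0" using tp t1 by simp
    have L: "ln (1 + 1/\<tau>) \<ge> ln (1/\<tau>)" using tp by (subst ln_le_cancel_iff) (auto simp: add_pos_pos)
    have Lp: "ln (1 + 1/\<tau>) > 0" using l1 L by linarith
    have Tv: "T = 1 / ln (1/\<tau>)" using tn by (simp add: T_def)
    show ?thesis
    proof (cases "b = 0")
      case True
      have "1 + a/\<tau> \<le> (1 + 1/\<tau>) * (1 + a)" using tp a0
        by (simp add: field_simps)
      hence "ln (1 + a/\<tau>) \<le> ln ((1 + 1/\<tau>) * (1 + a))" using tp a0 by (subst ln_le_cancel_iff) (auto simp: add_pos_pos intro!: mult_pos_pos add_pos_nonneg)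
      also have "\<dots> = ln (1 + 1/\<tau>) + ln (1 + a)" using tp a0 add_pos_pos[of 1 "1/\<tau>"] by (subst ln_mult) auto
      also have "ln (1 + a) \<le> a" using a0 by (simp add: ln_add_one_self_le_self)
      finally have "ln (1 + a/\<tau>) \<le> ln (1 + 1/\<tau>) + a" by simp
      hence p1: "phi \<tau> a \<le> 1 + a / ln (1 + 1/\<tau>)" using tn Lp
        by (simp add: phi_def divide_simps)
      have p2: "a / ln (1 + 1/\<tau>) \<le> a / ln (1/\<tau>)"
        using a0 l1 L by (simp add: frac_le)
      have p3: "1 \<le> a / c3" using c3 by simp
      have "phi \<tau> a \<le> a/c3 + a * T" using Tv p1 p2 p3 by simp
      also have "\<dots> \<le> ((2 * c2i + 1) * T + 1/c3) * a"
        using T0 c2i a0 by (simp add: algebra_simps mult_nonneg_nonneg)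
      finally show ?thesis using True a0 unfolding T_def by simp
    next
      case False
      from bc[OF False] have c2: "c2i = 1/c2" "0 < c2" "c2 \<le> b" by auto
      have bp: "b > 0" using c2 by linarith
      have pa: "1 + a/\<tau> > 0" "1 + b/\<tau> > 0" using tp a0 bp
        by (auto intro!: add_pos_pos divide_pos_pos)
      have "ln (1 + a/\<tau>) - ln (1 + b/\<tau>) = ln ((1 + a/\<tau>) / (1 + b/\<tau>))"
        using pa by (simp add: ln_div)
      also have "\<dots> \<le> (1 + a/\<tau>) / (1 + b/\<tau>) - 1"
        using pa by (intro ln_le_minus_one) simp
      also have "\<dots> = (a - b) / (\<tau> + b)"
      proof -
        have e1: "1 + a/\<tau> = (\<tau> + a)/\<tau>" "1 + b/\<tau> = (\<tau> + b)/\<tau>" using tp by (auto simp: field_simps)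
        have "(1 + a/\<tau>) / (1 + b/\<tau>) = (\<tau> + a)/(\<tau> + b)" unfolding e1 using tp by simp
        moreover have "(\<tau> + a)/(\<tau> + b) - 1 = (a - b)/(\<tau> + b)" using tp bp by (simp add: field_simps)
        ultimately show ?thesis by simp
      qed
      also have "\<dots> \<le> \<bar>a - b\<bar> / c2"
        using tp bp c2 by (intro frac_le) auto
      finally have d: "ln (1 + a/\<tau>) - ln (1 + b/\<tau>) \<le> \<bar>a - b\<bar> / c2" .
      have "phi \<tau> a - phi \<tau> b = (ln (1 + a/\<tau>) - ln (1 + b/\<tau>)) / ln (1 + 1/\<tau>)"
        using tn by (simp add: phi_def diff_divide_distrib)
      also have "\<dots> \<le> (\<bar>a - b\<bar> / c2) / ln (1 + 1/\<tau>)"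
        using d Lp using divide_right_mono[OF d, of "ln (1 + 1/\<tau>)"] by simp
      also have "\<dots> \<le> (\<bar>a - b\<bar> / c2) / ln (1/\<tau>)"
        using Lp l1 L c2 by (intro divide_left_mono) auto
      also have "\<dots> = c2i * T * \<bar>a - b\<bar>" using c2 Tv by simp
      also have "\<dots> \<le> ((2 * c2i + 1) * T + 1/c3) * \<bar>a - b\<bar>"
        using T0 c2i c3 by (intro mult_right_mono) (auto simp: algebra_simps)
      finally show ?thesis unfolding T_def .
    qed
  qed
qed

lemma normsq: "(norm (x::real^'p))^2 = (\<Sum>j\<in>UNIV. (x$j)^2)"
  by (simp add: norm_vec_def L2_set_def sum_nonneg)

lemma gn_L2: "group_norm b G = L2_set (\<lambda>j. b$j) G"
  by (simp add: group_norm_def L2_set_def)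

lemma sum_abs_le:
  assumes "finite A"
  shows "(\<Sum>j\<in>A. \<bar>f j\<bar>) \<le> sqrt (real (card A)) * sqrt (\<Sum>j\<in>A. (f j)^2)"
proof -
  have "(\<Sum>j\<in>A. \<bar>f j\<bar> * \<bar>1\<bar>) \<le> L2_set f A * L2_set (\<lambda>_. 1) A"
    by (rule L2_set_mult_ineq)
  then show ?thesis by (simp add: L2_set_constant L2_set_def mult.commute)
qed

lemma sum_abs_vec: "(\<Sum>j\<in>A. \<bar>x$j\<bar>) \<le> sqrt (real (card A)) * norm (x::real^'p)"
proof -
  have "(\<Sum>j\<in>A. \<bar>x$j\<bar>) \<le> sqrt (real (card A)) * sqrt (\<Sum>j\<in>A. (x$j)^2)"
    by (rule sum_abs_le) simp
  also have "sqrt (\<Sum>j\<in>A. (x$j)^2) \<le> sqrt (\<Sum>j\<in>UNIV. (x$j)^2)"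
    by (intro real_sqrt_le_mono sum_mono2) auto
  also have "\<dots> = norm x" by (simp add: norm_vec_def L2_set_def)
  finally show ?thesis by (simp add: mult_left_mono)
qed

definition pen :: "real \<Rightarrow> 'p set set \<Rightarrow> real \<Rightarrow> real \<Rightarrow> real^'p \<Rightarrow> real" where
  "pen \<tau> \<G> r1 r2 b = r1 * (\<Sum>j\<in>UNIV. phi \<tau> \<bar>b$j\<bar>)
     + r2 * (\<Sum>G\<in>\<G>. sqrt (real (card G)) * phi \<tau> (group_norm b G))"

lemma Vobj_eq: "Vobj X y \<G> lam \<rho>1 \<rho>2 \<tau> b = (norm (y - X *v b))^2 + lam * (norm b)^2 + pen \<tau> \<G> \<rho>1 \<rho>2 b"
proof (cases "\<tau> = 0")
  case True
  have "real (card (supp b)) = (\<Sum>j\<in>UNIV. phi \<tau> \<bar>b$j\<bar>)"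
    using True by (simp add: phi_def supp_def sum.If_cases)
  then show ?thesis using True
    by (simp add: Vobj_def V0_def pen_def phi_def)
next
  case False
  then show ?thesis by (simp add: Vobj_def Vtau_def pen_def phi_def)
qed

lemma inner_mat: "(e::real^'n) \<bullet> (X *v d) = (transpose X *v e) \<bullet> (d::real^'p)"
  by (simp add: dot_lmul_matrix)

lemma Xnorm: "(norm (X *v d))^2 = d \<bullet> ((transpose X ** X) *v (d::real^'p))"
proof -
  have "(norm (X *v d))^2 = (X *v d) \<bullet> (X *v d)" by (simp add: power2_norm_eq_inner)
  also have "\<dots> = (transpose X *v (X *v d)) \<bullet> d" by (rule inner_mat)
  also have "\<dots> = d \<bullet> ((transpose X ** X) *v d)" by (simp add: matrix_vector_mul_assoc inner_commute)
  finally show ?thesis .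
qed

lemma kappa_le:
  fixes X :: "real^'p^'n" and d :: "real^'p"
  shows "real CARD('n) * kappa X * (norm d)^2 \<le> (norm (X *v d))^2"
proof (cases "d = 0")
  case True then show ?thesis by simp
next
  case False
  define K where "K = Inf {w \<bullet> ((transpose X ** X) *v w) | w. norm w = 1}"
  define w where "w = (1 / norm d) *\<^sub>R d"
  have nw: "norm w = 1" using False by (simp add: w_def)
  have bdd: "bdd_below {w \<bullet> ((transpose X ** X) *v w) | w. norm w = 1}"
    by (rule bdd_belowI[of _ 0]) (auto simp: Xnorm[symmetric])
  have "K \<le> w \<bullet> ((transpose X ** X) *v w)"
    unfolding K_def by (rule cInf_lower[OF _ bdd]) (use nw in blast)
  also have "\<dots> = (norm (X *v w))^2" by (simp add: Xnorm)
  also have "\<dots> = (norm (X *v d))^2 / (norm d)^2"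
    by (simp add: w_def matrix_vector_mult_scaleR power_divide)
  finally have "K * (norm d)^2 \<le> (norm (X *v d))^2" using False by (simp add: field_simps)
  moreover have "real CARD('n) * kappa X = K" by (simp add: kappa_def K_def)
  ultimately show ?thesis by simp
qed

lemma L2_abs: "L2_set (\<lambda>j. \<bar>f j\<bar>) G = L2_set f G"
  by (simp add: L2_set_def)

lemma gn_ge: "finite G \<Longrightarrow> j \<in> G \<Longrightarrow> \<bar>b$j\<bar> \<le> group_norm b G"
  using member_le_L2_set[of G j "\<lambda>j. \<bar>b$j\<bar>"] by (simp add: gn_L2 L2_abs)

lemma gn_nz: "finite G \<Longrightarrow> group_norm b G \<noteq> 0 \<Longrightarrow> \<exists>j\<in>G. b$j \<noteq> 0"
  using L2_set_eq_0_iff[of G "\<lambda>j. b$j"] by (auto simp: gn_L2)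

lemma gn_diff: "\<bar>group_norm a G - group_norm b G\<bar> \<le> group_norm (b - a) G"
proof -
  have 1: "group_norm b G \<le> group_norm a G + group_norm (b - a) G"
    using L2_set_triangle_ineq[of "\<lambda>j. a$j" "\<lambda>j. (b - a)$j" G] by (simp add: gn_L2)
  have "group_norm a G \<le> group_norm b G + group_norm (a - b) G"
    using L2_set_triangle_ineq[of "\<lambda>j. b$j" "\<lambda>j. (a - b)$j" G] by (simp add: gn_L2)
  moreover have "group_norm (a - b) G = group_norm (b - a) G"
    by (simp add: group_norm_def power2_commute)
  ultimately show ?thesis using 1 by linarith
qed

lemma gn_sq: "(group_norm b G)^2 = (\<Sum>j\<in>G. (b$j)^2)"
  by (simp add: group_norm_def sum_nonneg)

lemma cs_sqrt:
  fixes a b :: "'a \<Rightarrow> real"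
  shows "(\<Sum>i\<in>I. a i * b i) \<le> sqrt (\<Sum>i\<in>I. (a i)^2) * sqrt (\<Sum>i\<in>I. (b i)^2)"
proof -
  have "(\<Sum>i\<in>I. a i * b i) \<le> sqrt ((\<Sum>i\<in>I. a i * b i)^2)" by simp
  also have "\<dots> \<le> sqrt ((\<Sum>i\<in>I. (a i)^2) * (\<Sum>i\<in>I. (b i)^2))"
    by (intro real_sqrt_le_mono Cauchy_Schwarz_ineq_sum)
  finally show ?thesis by (simp add: real_sqrt_mult)
qed

lemma finite_G: "finite (\<G> :: ('p::finite) set set)"
  by (rule finite_subset[OF subset_UNIV]) simp

lemma pen_diff:
  fixes \<beta> bhat :: "real^'p" and \<G> :: "'p set set"
  assumes groups: "is_group_partition \<G>" and s_pos: "card (supp \<beta>) \<ge> 1"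
    and t0: "0 \<le> \<tau>" and t1: "\<tau> < 1" and r1: "\<rho>1 \<ge> 0" and r2: "\<rho>2 \<ge> 0"
  defines "C \<equiv> (2 * (if supp bhat = {} then 0 else 1 / Min ((\<lambda>j. \<bar>bhat$j\<bar>) ` supp bhat)) + 1)
            * (if \<tau> = 0 then 0 else 1 / ln (1 / \<tau>))
          + 1 / Min ((\<lambda>j. \<bar>\<beta>$j\<bar>) ` supp \<beta>)"
  shows "pen \<tau> \<G> \<rho>1 \<rho>2 \<beta> - pen \<tau> \<G> \<rho>1 \<rho>2 bhat
     \<le> (\<rho>1 + \<rho>2) * sqrt (real (qR \<G> \<beta>)) * C * norm (bhat - \<beta>)"
proof -
  define S where "S = supp \<beta>"
  define Sh where "Sh = supp bhat"
  define c3 where "c3 = Min ((\<lambda>j. \<bar>\<beta>$j\<bar>) ` S)"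
  define c2 where "c2 = Min ((\<lambda>j. \<bar>bhat$j\<bar>) ` Sh)"
  define c2i where "c2i = (if Sh = {} then 0 else 1 / c2)"
  define d where "d = bhat - \<beta>"
  define R where "R = {G\<in>\<G>. group_norm \<beta> G \<noteq> 0}"
  have Sne: "S \<noteq> {}" using s_pos by (auto simp: S_def)
  have finS: "finite S" by simp
  have c3S: "c3 \<le> \<bar>\<beta>$j\<bar>" if "j \<in> S" for j
    unfolding c3_def using that finS by (intro Min_le) auto
  have c3p: "c3 > 0"
  proof -
    have "c3 \<in> (\<lambda>j. \<bar>\<beta>$j\<bar>) ` S" unfolding c3_def using Sne finS by (intro Min_in) auto
    then show ?thesis by (auto simp: S_def supp_def)
  qed
  have c2S: "c2 \<le> \<bar>bhat$j\<bar>" if "j \<in> Sh" for j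
    unfolding c2_def using that by (intro Min_le) auto
  have c2p: "c2 > 0" if "Sh \<noteq> {}"
  proof -
    have "c2 \<in> (\<lambda>j. \<bar>bhat$j\<bar>) ` Sh" unfolding c2_def using that by (intro Min_in) auto
    then show ?thesis by (auto simp: Sh_def supp_def)
  qed
  have c2i0: "c2i \<ge> 0" by (cases "Sh = {}") (use c2p in \<open>auto simp: c2i_def\<close>)
  have Cdef: "C = (2 * c2i + 1) * (if \<tau> = 0 then 0 else 1 / ln (1/\<tau>)) + 1/c3"
    unfolding C_def c2i_def c2_def c3_def Sh_def S_def by simp
  have C0: "C \<ge> 0" unfolding Cdef using c2i0 c3p t0 t1
    by (intro add_nonneg_nonneg mult_nonneg_nonneg) auto
  have key: "phi \<tau> a - phi \<tau> b \<le> C * \<bar>a - b\<bar>"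
    if h1: "c3 \<le> a" and h2: "0 \<le> b" and h3: "b \<noteq> 0 \<Longrightarrow> \<exists>j\<in>Sh. \<bar>bhat$j\<bar> \<le> b" for a b
  proof -
    have "b \<noteq> 0 \<Longrightarrow> c2i = 1/c2 \<and> 0 < c2 \<and> c2 \<le> b"
    proof -
      assume "b \<noteq> 0"
      then obtain j where j: "j \<in> Sh" "\<bar>bhat$j\<bar> \<le> b" using h3 by blast
      then have "Sh \<noteq> {}" by auto
      then show ?thesis using c2S[OF j(1)] j c2p by (auto simp: c2i_def)
    qed
    then show ?thesis unfolding Cdef
      using phi_bound[OF t0 t1 c3p h1 h2 c2i0] by blast
  qed
  have coord: "(\<Sum>j\<in>UNIV. phi \<tau> \<bar>\<beta>$j\<bar>) - (\<Sum>j\<in>UNIV. phi \<tau> \<bar>bhat$j\<bar>)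
        \<le> C * sqrt (real (card S)) * norm d"
  proof -
    have "(\<Sum>j\<in>UNIV. phi \<tau> \<bar>\<beta>$j\<bar>) - (\<Sum>j\<in>UNIV. phi \<tau> \<bar>bhat$j\<bar>)
        = (\<Sum>j\<in>UNIV. phi \<tau> \<bar>\<beta>$j\<bar> - phi \<tau> \<bar>bhat$j\<bar>)" by (simp add: sum_subtractf)
    also have "\<dots> \<le> (\<Sum>j\<in>UNIV. if j \<in> S then C * \<bar>d$j\<bar> else 0)"
    proof (rule sum_mono)
      fix j :: 'p
      show "phi \<tau> \<bar>\<beta>$j\<bar> - phi \<tau> \<bar>bhat$j\<bar> \<le> (if j \<in> S then C * \<bar>d$j\<bar> else 0)"
      proof (cases "j \<in> S")
        case True
        have "phi \<tau> \<bar>\<beta>$j\<bar> - phi \<tau> \<bar>bhat$j\<bar> \<le> C * \<bar>\<bar>\<beta>$j\<bar> - \<bar>bhat$j\<bar>\<bar>"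
          by (rule key) (use c3S[OF True] in \<open>auto simp: Sh_def supp_def\<close>)
        also have "\<dots> \<le> C * \<bar>d$j\<bar>" using C0 unfolding d_def
          by (intro mult_left_mono) (auto simp: abs_le_iff)
        finally show ?thesis using True by simp
      next
        case False
        then have "\<beta>$j = 0" by (simp add: S_def supp_def)
        then show ?thesis using False phi_nonneg[OF t0, of "\<bar>bhat$j\<bar>"] by simp
      qed
    qed
    also have "\<dots> = C * (\<Sum>j\<in>S. \<bar>d$j\<bar>)"
      by (simp add: sum.If_cases sum_distrib_left)
    also have "\<dots> \<le> C * (sqrt (real (card S)) * norm d)"
      using C0 by (intro mult_left_mono sum_abs_vec) auto
    finally show ?thesis by (simp add: mult.assoc)
  qed
  have finG: "finite \<G>" by (rule finite_G)
  have finGG: "finite G" for G :: "'p set" by simp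
  have disj: "pairwise disjnt \<G>" using groups by (simp add: is_group_partition_def disjoint_def)
  have UG: "\<Union>\<G> = UNIV" using groups by (simp add: is_group_partition_def)
  have grp: "(\<Sum>G\<in>\<G>. sqrt (real (card G)) * phi \<tau> (group_norm \<beta> G))
       - (\<Sum>G\<in>\<G>. sqrt (real (card G)) * phi \<tau> (group_norm bhat G))
       \<le> C * sqrt (real (qR \<G> \<beta>)) * norm d"
  proof -
    have "(\<Sum>G\<in>\<G>. sqrt (real (card G)) * phi \<tau> (group_norm \<beta> G))
       - (\<Sum>G\<in>\<G>. sqrt (real (card G)) * phi \<tau> (group_norm bhat G))
       = (\<Sum>G\<in>\<G>. sqrt (real (card G)) * (phi \<tau> (group_norm \<beta> G) - phi \<tau> (group_norm bhat G)))"
      by (simp add: sum_subtractf right_diff_distrib)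
    also have "\<dots> \<le> (\<Sum>G\<in>\<G>. if group_norm \<beta> G \<noteq> 0 then sqrt (real (card G)) * (C * group_norm d G) else 0)"
    proof (rule sum_mono)
      fix G assume GG: "G \<in> \<G>"
      show "sqrt (real (card G)) * (phi \<tau> (group_norm \<beta> G) - phi \<tau> (group_norm bhat G))
         \<le> (if group_norm \<beta> G \<noteq> 0 then sqrt (real (card G)) * (C * group_norm d G) else 0)"
      proof (cases "group_norm \<beta> G \<noteq> 0")
        case True
        obtain j where j: "j \<in> G" "\<beta>$j \<noteq> 0" using gn_nz[OF finGG True] by blast
        have a: "c3 \<le> group_norm \<beta> G"
          using c3S[of j] j gn_ge[OF finGG j(1), of \<beta>] by (auto simp: S_def supp_def)
        have b: "group_norm bhat G \<noteq> 0 \<Longrightarrow> \<exists>j\<in>Sh. \<bar>bhat$j\<bar> \<le> group_norm bhat G"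
        proof -
          assume "group_norm bhat G \<noteq> 0"
          then obtain k where "k \<in> G" "bhat$k \<noteq> 0" using gn_nz[OF finGG] by blast
          then show ?thesis using gn_ge[OF finGG \<open>k \<in> G\<close>, of bhat] by (auto simp: Sh_def supp_def)
        qed
        have "phi \<tau> (group_norm \<beta> G) - phi \<tau> (group_norm bhat G)
            \<le> C * \<bar>group_norm \<beta> G - group_norm bhat G\<bar>"
          by (rule key[OF a _ b]) (simp add: group_norm_def sum_nonneg)
        also have "\<dots> \<le> C * group_norm d G"
          unfolding d_def using C0 gn_diff by (intro mult_left_mono) auto
        finally show ?thesis using True by (simp add: mult_left_mono)
      next
        case False
        then show ?thesis
          using phi_nonneg[OF t0, of "group_norm bhat G"]
          by (simp add: group_norm_def sum_nonneg mult_nonneg_nonpos)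
      qed
    qed
    also have "\<dots> = (\<Sum>G\<in>R. sqrt (real (card G)) * (C * group_norm d G))"
      unfolding R_def using finG by (simp add: sum.inter_filter)
    also have "\<dots> = C * (\<Sum>G\<in>R. sqrt (real (card G)) * group_norm d G)"
      by (simp add: sum_distrib_left algebra_simps)
    finally have st1: "(\<Sum>G\<in>\<G>. sqrt (real (card G)) * phi \<tau> (group_norm \<beta> G))
       - (\<Sum>G\<in>\<G>. sqrt (real (card G)) * phi \<tau> (group_norm bhat G))
       \<le> C * (\<Sum>G\<in>R. sqrt (real (card G)) * group_norm d G)" .
    have cs: "(\<Sum>G\<in>R. sqrt (real (card G)) * group_norm d G)
        \<le> sqrt (\<Sum>G\<in>R. (sqrt (real (card G)))^2) * sqrt (\<Sum>G\<in>R. (group_norm d G)^2)"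
      by (rule cs_sqrt)
    have e1: "(\<Sum>G\<in>R. (sqrt (real (card G)))^2) = real (qR \<G> \<beta>)"
    proof -
      have "(\<Sum>G\<in>R. (sqrt (real (card G)))^2) = real (\<Sum>G\<in>R. card G)" by simp
      also have "(\<Sum>G\<in>R. card G) = card (\<Union>R)"
        by (rule card_Union_disjoint[symmetric]) (use disj in \<open>auto simp: R_def pairwise_def\<close>)
      finally show ?thesis by (simp add: qR_def R_def)
    qed
    have e2: "(\<Sum>G\<in>R. (group_norm d G)^2) \<le> (norm d)^2"
    proof -
      have "(\<Sum>G\<in>R. (group_norm d G)^2) \<le> (\<Sum>G\<in>\<G>. (group_norm d G)^2)"
        using finG by (intro sum_mono2) (auto simp: R_def)
      also have "\<dots> = (\<Sum>G\<in>\<G>. \<Sum>j\<in>G. (d$j)^2)" by (simp add: gn_sq)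
      also have "\<dots> = (\<Sum>j\<in>\<Union>\<G>. (d$j)^2)"
        using disj by (subst sum.Union_disjoint) (auto simp: pairwise_def disjnt_def)
      also have "\<dots> = (norm d)^2" using UG by (simp add: normsq)
      finally show ?thesis .
    qed
    have e3: "sqrt (\<Sum>G\<in>R. (group_norm d G)^2) \<le> norm d"
      using real_sqrt_le_mono[OF e2] by simp
    have "(\<Sum>G\<in>R. sqrt (real (card G)) * group_norm d G) \<le> sqrt (real (qR \<G> \<beta>)) * norm d"
    proof -
      have "sqrt (real (qR \<G> \<beta>)) * sqrt (\<Sum>G\<in>R. (group_norm d G)^2) \<le> sqrt (real (qR \<G> \<beta>)) * norm d"
        by (rule mult_left_mono[OF e3]) simp
      then show ?thesis using cs unfolding e1 by (rule order_trans[rotated])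
    qed
    then have "C * (\<Sum>G\<in>R. sqrt (real (card G)) * group_norm d G) \<le> C * (sqrt (real (qR \<G> \<beta>)) * norm d)"
      using C0 by (rule mult_left_mono)
    then show ?thesis using st1 by (simp add: mult.assoc)
  qed
  have sq: "card S \<le> qR \<G> \<beta>"
  proof -
    have "S \<subseteq> \<Union>R"
    proof
      fix j assume j: "j \<in> S"
      have "j \<in> \<Union>\<G>" using UG by simp
      then obtain G where G: "G \<in> \<G>" "j \<in> G" by auto
      have bj: "\<bar>\<beta>$j\<bar> > 0" using j unfolding S_def supp_def by simp
      have "\<bar>\<beta>$j\<bar> \<le> group_norm \<beta> G" by (rule gn_ge[OF finGG G(2)])
      then have "group_norm \<beta> G \<noteq> 0" using bj by linarith
      then show "j \<in> \<Union>R" using G unfolding R_def by blast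
    qed
    then have "card S \<le> card (\<Union>R)" by (rule card_mono[rotated]) simp
    then show ?thesis unfolding qR_def R_def .
  qed
  have "pen \<tau> \<G> \<rho>1 \<rho>2 \<beta> - pen \<tau> \<G> \<rho>1 \<rho>2 bhat
     = \<rho>1 * ((\<Sum>j\<in>UNIV. phi \<tau> \<bar>\<beta>$j\<bar>) - (\<Sum>j\<in>UNIV. phi \<tau> \<bar>bhat$j\<bar>))
       + \<rho>2 * ((\<Sum>G\<in>\<G>. sqrt (real (card G)) * phi \<tau> (group_norm \<beta> G))
       - (\<Sum>G\<in>\<G>. sqrt (real (card G)) * phi \<tau> (group_norm bhat G)))"
    by (simp add: pen_def algebra_simps)
  also have "\<dots> \<le> \<rho>1 * (C * sqrt (real (qR \<G> \<beta>)) * norm d) + \<rho>2 * (C * sqrt (real (qR \<G> \<beta>)) * norm d)"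
  proof (intro add_mono mult_left_mono r1 r2 grp)
    have "C * sqrt (real (card S)) * norm d \<le> C * sqrt (real (qR \<G> \<beta>)) * norm d"
      using C0 sq by (intro mult_right_mono mult_left_mono) auto
    then show "(\<Sum>j\<in>UNIV. phi \<tau> \<bar>\<beta>$j\<bar>) - (\<Sum>j\<in>UNIV. phi \<tau> \<bar>bhat$j\<bar>) \<le> C * sqrt (real (qR \<G> \<beta>)) * norm d"
      using coord by linarith
  qed
  also have "\<dots> = (\<rho>1 + \<rho>2) * sqrt (real (qR \<G> \<beta>)) * C * norm (bhat - \<beta>)"
    by (simp add: d_def algebra_simps)
  finally show ?thesis .
qed

lemma sqrt_bound:
  fixes s sh q :: real
  assumes "1 \<le> s" "0 \<le> sh" "s \<le> q"
  shows "2 * sqrt (s + sh) \<le> sqrt q * (4 * (1 + sqrt (sh / (4 * s))))"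
proof -
  have q0: "0 \<le> q" using assms by linarith
  have "sqrt (s + sh) \<le> sqrt s + sqrt sh" using assms by (intro sqrt_add_le_add_sqrt) auto
  also have "sqrt sh = 2 * sqrt s * sqrt (sh / (4 * s))"
  proof -
    have "sqrt (sh / (4 * s)) = sqrt sh / (2 * sqrt s)"
      using assms by (simp add: real_sqrt_divide real_sqrt_mult)
    then show ?thesis using assms by simp
  qed
  finally have "sqrt (s + sh) \<le> sqrt s * (1 + 2 * sqrt (sh / (4 * s)))" by (simp add: algebra_simps)
  also have "\<dots> \<le> sqrt q * (1 + 2 * sqrt (sh / (4 * s)))"
    using assms q0 by (intro mult_right_mono) auto
  finally have "2 * sqrt (s + sh) \<le> 2 * (sqrt q * (1 + 2 * sqrt (sh / (4 * s))))" by simp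
  also have "\<dots> \<le> sqrt q * (4 * (1 + sqrt (sh / (4 * s))))"
    using q0 by (simp add: algebra_simps)
  finally show ?thesis .
qed

lemma supnorm_ge: "\<bar>v$i\<bar> \<le> supnorm v"
  unfolding supnorm_def by (rule Max_ge) auto

theorem theorem1:
  fixes X :: "real^'p^'n" and y :: "real^'n" and \<beta> bhat :: "real^'p"
    and \<G> :: "'p set set" and lam \<rho>1 \<rho>2 \<tau> :: real
  assumes groups: "is_group_partition \<G>"
    and s_pos: "card (supp \<beta>) \<ge> 1"
    and "lam \<ge> 0" and "\<rho>1 \<ge> 0" and "\<rho>2 \<ge> 0"
    and "0 \<le> \<tau>" and "\<tau> < 1"
    and minimizer: "\<forall>b. Vobj X y \<G> lam \<rho>1 \<rho>2 \<tau> bhat \<le> Vobj X y \<G> lam \<rho>1 \<rho>2 \<tau> b"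
    and "1 \<le> max (qR \<G> \<beta>) (card (supp bhat))"
    and "max (qR \<G> \<beta>) (card (supp bhat)) \<le> CARD('p)"
    and "kappa X + lam / real CARD('n) > 0"
  shows "norm (bhat - \<beta>) \<le>
    sqrt (real (qR \<G> \<beta>)) / (kappa X + lam / real CARD('n)) *
      ( 4 * (1 + sqrt (real (card (supp bhat)) / (4 * real (card (supp \<beta>)))))
            * supnorm (transpose X *v (y - X *v \<beta>)) / real CARD('n)
      + 2 * Max ((\<lambda>j. \<bar>\<beta>$j\<bar>) ` supp \<beta>) * lam / real CARD('n)
      + ( (2 * (if supp bhat = {} then 0 else 1 / Min ((\<lambda>j. \<bar>bhat$j\<bar>) ` supp bhat)) + 1)
            * (if \<tau> = 0 then 0 else 1 / ln (1 / \<tau>))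
          + 1 / Min ((\<lambda>j. \<bar>\<beta>$j\<bar>) ` supp \<beta>))
        * (\<rho>1 + \<rho>2) / real CARD('n))"
proof -
  note lam0 = \<open>lam \<ge> 0\<close> and r1 = \<open>\<rho>1 \<ge> 0\<close> and r2 = \<open>\<rho>2 \<ge> 0\<close>
  note t0 = \<open>0 \<le> \<tau>\<close> and t1 = \<open>\<tau> < 1\<close> and kp = \<open>kappa X + lam / real CARD('n) > 0\<close>
  define n where "n = real CARD('n)"
  have npos: "n > 0" by (simp add: n_def)
  define C where "C = (2 * (if supp bhat = {} then 0 else 1 / Min ((\<lambda>j. \<bar>bhat$j\<bar>) ` supp bhat)) + 1)
            * (if \<tau> = 0 then 0 else 1 / ln (1 / \<tau>))
          + 1 / Min ((\<lambda>j. \<bar>\<beta>$j\<bar>) ` supp \<beta>)"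
  define d where "d = bhat - \<beta>"
  define e where "e = y - X *v \<beta>"
  define v where "v = transpose X *v e"
  define sup where "sup = supnorm v"
  define M where "M = Max ((\<lambda>j. \<bar>\<beta>$j\<bar>) ` supp \<beta>)"
  define S where "S = supp \<beta>"
  define Sh where "Sh = supp bhat"
  define s where "s = real (card S)"
  define sh where "sh = real (card Sh)"
  define q where "q = real (qR \<G> \<beta>)"
  define P where "P = pen \<tau> \<G> \<rho>1 \<rho>2"
  have Sne: "S \<noteq> {}" using s_pos by (auto simp: S_def)
  have s1: "1 \<le> s" using s_pos by (simp add: s_def S_def)
  have sup0: "0 \<le> sup" unfolding sup_def using supnorm_ge[of v] abs_ge_zero order_trans by blast
  have Mge: "\<bar>\<beta>$j\<bar> \<le> M" if "j \<in> S" for j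
    unfolding M_def using that by (intro Max_ge) (auto simp: S_def)
  have M0: "0 \<le> M" using Sne Mge by (meson abs_ge_zero all_not_in_conv order_trans)
  have C0: "0 \<le> C"
  proof -
    have "Min ((\<lambda>j. \<bar>\<beta>$j\<bar>) ` supp \<beta>) \<ge> 0" using Sne by (intro Min.boundedI) (auto simp: S_def)
    moreover have "Min ((\<lambda>j. \<bar>bhat$j\<bar>) ` supp bhat) \<ge> 0" if "supp bhat \<noteq> {}"
      using that by (intro Min.boundedI) auto
    ultimately show ?thesis unfolding C_def using t0 t1
      by (intro add_nonneg_nonneg mult_nonneg_nonneg) auto
  qed
  have sq: "s \<le> q"
  proof -
    have finGG: "finite G" for G :: "'p set" by simp
    have UG: "\<Union>\<G> = UNIV" using groups by (simp add: is_group_partition_def)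
    have "S \<subseteq> \<Union>{G\<in>\<G>. group_norm \<beta> G \<noteq> 0}"
    proof
      fix j assume j: "j \<in> S"
      have "j \<in> \<Union>\<G>" using UG by simp
      then obtain G where G: "G \<in> \<G>" "j \<in> G" by auto
      have bj: "\<bar>\<beta>$j\<bar> > 0" using j unfolding S_def supp_def by simp
      have "\<bar>\<beta>$j\<bar> \<le> group_norm \<beta> G" by (rule gn_ge[OF finGG G(2)])
      then have "group_norm \<beta> G \<noteq> 0" using bj by linarith
      then show "j \<in> \<Union>{G\<in>\<G>. group_norm \<beta> G \<noteq> 0}" using G by blast
    qed
    then have "card S \<le> card (\<Union>{G\<in>\<G>. group_norm \<beta> G \<noteq> 0})" by (rule card_mono[rotated]) simp
    then show ?thesis unfolding q_def s_def qR_def by simp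
  qed
  have bh: "bhat = \<beta> + d" by (simp add: d_def)
  have m: "Vobj X y \<G> lam \<rho>1 \<rho>2 \<tau> bhat \<le> Vobj X y \<G> lam \<rho>1 \<rho>2 \<tau> \<beta>" using minimizer by blast
  have e1: "y - X *v bhat = e - X *v d" by (simp add: e_def bh matrix_vector_right_distrib)
  have e2: "(norm (e - X *v d))^2 = (norm e)^2 - 2 * (v \<bullet> d) + (norm (X *v d))^2"
  proof -
    have "(norm (e - X *v d))^2 = (e - X *v d) \<bullet> (e - X *v d)" by (simp add: power2_norm_eq_inner)
    also have "\<dots> = e \<bullet> e - 2 * (e \<bullet> (X *v d)) + (X *v d) \<bullet> (X *v d)"
      by (simp add: inner_diff_left inner_diff_right inner_commute)
    finally show ?thesis by (simp add: power2_norm_eq_inner inner_mat v_def)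
  qed
  have e3: "(norm bhat)^2 = (norm \<beta>)^2 + 2 * (\<beta> \<bullet> d) + (norm d)^2"
    by (simp add: bh power2_norm_eq_inner inner_add_left inner_add_right inner_commute)
  have basic: "(norm (X *v d))^2 + lam * (norm d)^2 \<le> 2 * (v \<bullet> d) - 2 * lam * (\<beta> \<bullet> d) + (P \<beta> - P bhat)"
    using m unfolding Vobj_eq e1 e2 e3 e_def[symmetric] P_def by (simp add: algebra_simps)
  have vd: "v \<bullet> d \<le> sup * sqrt (s + sh) * norm d"
  proof -
    have "v \<bullet> d = (\<Sum>j\<in>UNIV. v$j * d$j)" by (simp add: inner_vec_def)
    also have "\<dots> \<le> (\<Sum>j\<in>UNIV. sup * \<bar>d$j\<bar>)"
    proof (rule sum_mono)
      fix j
      have "v$j * d$j \<le> \<bar>v$j\<bar> * \<bar>d$j\<bar>" by (simp add: abs_mult[symmetric])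
      also have "\<dots> \<le> sup * \<bar>d$j\<bar>" unfolding sup_def by (intro mult_right_mono supnorm_ge) auto
      finally show "v$j * d$j \<le> sup * \<bar>d$j\<bar>" .
    qed
    also have "(\<Sum>j\<in>UNIV. sup * \<bar>d$j\<bar>) = sup * (\<Sum>j\<in>S \<union> Sh. \<bar>d$j\<bar>)"
    proof -
      have "(\<Sum>j\<in>UNIV. \<bar>d$j\<bar>) = (\<Sum>j\<in>S \<union> Sh. \<bar>d$j\<bar>)"
        by (rule sum.mono_neutral_right) (auto simp: d_def S_def Sh_def supp_def)
      then show ?thesis by (simp add: sum_distrib_left[symmetric])
    qed
    also have "\<dots> \<le> sup * (sqrt (real (card (S \<union> Sh))) * norm d)"
      using sup0 by (intro mult_left_mono sum_abs_vec)
    also have "\<dots> \<le> sup * (sqrt (s + sh) * norm d)"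
    proof -
      have "real (card (S \<union> Sh)) \<le> s + sh"
        unfolding s_def sh_def using card_Un_le[of S Sh] by linarith
      then show ?thesis using sup0 by (intro mult_left_mono mult_right_mono) auto
    qed
    finally show ?thesis by (simp add: mult.assoc)
  qed
  have nb: "norm \<beta> \<le> sqrt s * M"
  proof -
    have "(norm \<beta>)^2 = (\<Sum>j\<in>UNIV. (\<beta>$j)^2)" by (rule normsq)
    also have "\<dots> = (\<Sum>j\<in>S. (\<beta>$j)^2)"
      by (rule sum.mono_neutral_right) (auto simp: S_def supp_def)
    also have "\<dots> \<le> (\<Sum>j\<in>S. M^2)"
    proof (rule sum_mono)
      fix j assume "j \<in> S"
      then have "\<bar>\<beta>$j\<bar> \<le> M" by (rule Mge)
      then show "(\<beta>$j)^2 \<le> M^2" by (metis abs_ge_zero power2_abs power_mono)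
    qed
    also have "\<dots> = (sqrt s * M)^2" by (simp add: s_def power_mult_distrib)
    finally have "(norm \<beta>)^2 \<le> (sqrt s * M)^2" .
    moreover have "0 \<le> sqrt s * M" using M0 by (simp add: s_def)
    ultimately show ?thesis by (rule power2_le_imp_le)
  qed
  have bd: "- (\<beta> \<bullet> d) \<le> sqrt s * M * norm d"
  proof -
    have "- (\<beta> \<bullet> d) \<le> norm \<beta> * norm d" using norm_cauchy_schwarz[of "-\<beta>" d] by simp
    also have "\<dots> \<le> sqrt s * M * norm d" using nb by (intro mult_right_mono) auto
    finally show ?thesis .
  qed
  have pd: "P \<beta> - P bhat \<le> (\<rho>1 + \<rho>2) * sqrt q * C * norm d"
    unfolding P_def q_def C_def d_def by (rule pen_diff[OF groups s_pos t0 t1 r1 r2])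
  have kap: "n * kappa X * (norm d)^2 \<le> (norm (X *v d))^2" unfolding n_def by (rule kappa_le)
  define A where "A = 2 * sup * sqrt (s + sh) + 2 * lam * sqrt s * M + (\<rho>1 + \<rho>2) * sqrt q * C"
  have main: "(n * kappa X + lam) * (norm d)^2 \<le> A * norm d"
  proof -
    have "2 * (v \<bullet> d) \<le> 2 * sup * sqrt (s + sh) * norm d" using vd by simp
    moreover have "- 2 * lam * (\<beta> \<bullet> d) \<le> 2 * lam * sqrt s * M * norm d"
      using mult_left_mono[OF bd, of "2 * lam"] lam0 by simp
    ultimately show ?thesis using basic kap pd unfolding A_def by (simp add: algebra_simps)
  qed
  have den: "n * kappa X + lam > 0"
  proof -
    have "n * (kappa X + lam / n) > 0" using npos kp unfolding n_def by simp
    then show ?thesis using npos by (simp add: algebra_simps)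
  qed
  have A_le: "A \<le> n * (sqrt q *
      ( 4 * (1 + sqrt (sh / (4 * s))) * sup / n + 2 * M * lam / n + C * (\<rho>1 + \<rho>2) / n))"
  proof -
    have "2 * sup * sqrt (s + sh) \<le> sqrt q * (4 * (1 + sqrt (sh / (4 * s)))) * sup"
      using mult_right_mono[OF sqrt_bound[OF s1 _ sq, of sh] sup0] by (simp add: sh_def algebra_simps)
    moreover have "2 * lam * sqrt s * M \<le> 2 * lam * sqrt q * M"
      using lam0 M0 sq by (intro mult_right_mono mult_left_mono) auto
    ultimately show ?thesis unfolding A_def using npos by (simp add: algebra_simps add_divide_distrib)
  qed
  have nd: "norm d \<le> A / (n * kappa X + lam)"
  proof (cases "norm d = 0")
    case True
    have "A \<ge> 0" unfolding A_def using sup0 lam0 M0 C0 r1 r2 s1 sq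
      by (intro add_nonneg_nonneg mult_nonneg_nonneg) (auto simp: sh_def)
    show ?thesis using \<open>A \<ge> 0\<close> True den by simp
  next
    case False
    then have "norm d > 0" by simp
    then have "(n * kappa X + lam) * norm d \<le> A" using main by (simp add: power2_eq_square)
    then show ?thesis using den by (simp add: field_simps)
  qed
  also have "\<dots> \<le> n * (sqrt q * ( 4 * (1 + sqrt (sh / (4 * s))) * sup / n + 2 * M * lam / n + C * (\<rho>1 + \<rho>2) / n))
      / (n * kappa X + lam)"
    using A_le den by (intro divide_right_mono) auto
  also have "\<dots> = sqrt q / (kappa X + lam / n) *
      ( 4 * (1 + sqrt (sh / (4 * s))) * sup / n + 2 * M * lam / n + C * (\<rho>1 + \<rho>2) / n)"
    using npos by (simp add: field_simps)
  finally show ?thesis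
    unfolding d_def q_def sh_def s_def S_def Sh_def sup_def v_def e_def M_def C_def n_def
    by (simp add: mult.assoc)
qed

end
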